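(* Let $\gamma_a,\gamma_s>0$, $\lambda\ge0$, $q>0$, $\sigma_B>0$, $\varepsilon_a\in(0,2)$, and let $\beta_a,\beta_s:\mathbb R\to\mathbb R$ be globally Lipschitz continuous with $\beta_a\ge0$, $\beta_s>0$. Let $\mu\in(\varepsilon_a^{1/4},2^{1/4})$. Then there exists $M_0>0$ such that for every $M_a\ge M_0$ and every initial condition $(T_a^{(0)},T_s^{(0)})\in[0,M_a]\times[0,\mu M_a]$, the solution $(T_a,T_s)$ of \[ \begin{cases} \gamma_a T_a'=-\lambda(T_a-T_s)+\varepsilon_a\sigma_B|T_s|^3T_s-2\varepsilon_a\sigma_B|T_a|^3T_a+q\beta_a(T_a),\\ \gamma_s T_s'=-\lambda(T_s-T_a)-\sigma_B|T_s|^3T_s+\varepsilon_a\sigma_B|T_a|^3T_a+q\beta_s(T_s),\\ T_a(0)=T_a^{(0)},\quad T_s(0)=T_s^{(0)} \end{cases} \] does not leave the rectangle $[0,M_a]\times[0,\mu M_a]$ for positive times. *)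

theory Defs
  imports "HOL-Analysis.Analysis"
begin

end

theory Submission
  imports Defs
begin

lemma der_at:
  fixes x d :: "real \<Rightarrow> real"
  assumes D: "\<forall>t\<in>{0..<T}. (x has_real_derivative d t) (at t within {0..<T})"
    and "0 < u" "u < T"
  shows "(x has_real_derivative d u) (at u)"
proof -
  have sub: "{0<..<T} \<subseteq> {0..<T}" by auto
  have "(x has_real_derivative d u) (at u within {0..<T})" using D assms(2,3) by simp
  then have "(x has_real_derivative d u) (at u within {0<..<T})"
    using sub by (rule has_field_derivative_subset)
  moreover have "at u within {0<..<T} = at u" by (rule at_within_open) (use assms(2,3) in auto)
  ultimately show ?thesis by simp
qed

lemma der_cont:
  fixes x d :: "real \<Rightarrow> real"
  assumes D: "\<forall>t\<in>{0..<T}. (x has_real_derivative d t) (at t within {0..<T})"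
    and "0 \<le> a" "b < T"
  shows "continuous_on {a..b} x"
proof -
  have "continuous_on {0..<T} x" unfolding continuous_on_eq_continuous_within
  proof
    fix t assume "t \<in> {0..<T}"
    then show "continuous (at t within {0..<T}) x" using D[rule_format, of t] by (intro DERIV_continuous)
  qed
  then show ?thesis by (rule continuous_on_subset) (use assms in auto)
qed

lemma local_upper:
  fixes x d :: "real \<Rightarrow> real"
  assumes D: "\<forall>t\<in>{0..<T}. (x has_real_derivative d t) (at t within {0..<T})"
    and cd: "continuous (at s within {0..<T}) d"
    and s: "0 \<le> s" "s < T" and le: "x s \<le> c" and str: "x s = c \<Longrightarrow> d s < 0"
  shows "\<exists>e>0. \<forall>t. s \<le> t \<and> t < s + e \<and> t < T \<longrightarrow> x t \<le> c"
proof (cases "x s < c")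
  case True
  have "(x has_real_derivative d s) (at s within {0..<T})" using D s by auto
  then have "continuous (at s within {0..<T}) x" by (rule DERIV_continuous)
  then have "\<exists>e>0. \<forall>t\<in>{0..<T}. dist t s < e \<longrightarrow> dist (x t) (x s) < c - x s"
    using True unfolding continuous_within_eps_delta by simp
  then obtain e where e: "e > 0" "\<forall>t\<in>{0..<T}. dist t s < e \<longrightarrow> dist (x t) (x s) < c - x s"
    by blast
  show ?thesis
  proof (intro exI[of _ e] conjI allI impI)
    fix t assume "s \<le> t \<and> t < s + e \<and> t < T"
    then have "dist (x t) (x s) < c - x s" using e s by (auto simp: dist_real_def)
    then show "x t \<le> c" by (auto simp: dist_real_def)
  qed (simp add: e(1))
next
  case False
  then have "d s < 0" using le str by auto
  then have "\<exists>e>0. \<forall>t\<in>{0..<T}. dist t s < e \<longrightarrow> dist (d t) (d s) < - d s"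
    using cd unfolding continuous_within_eps_delta by simp
  then obtain e where e: "e > 0" "\<forall>t\<in>{0..<T}. dist t s < e \<longrightarrow> dist (d t) (d s) < - d s"
    by blast
  show ?thesis
  proof (intro exI[of _ e] conjI allI impI)
    fix t assume t: "s \<le> t \<and> t < s + e \<and> t < T"
    have "x t \<le> x s"
    proof (rule DERIV_nonpos_imp_decreasing_open[of s t x])
      show "s \<le> t" using t by auto
      show "continuous_on {s..t} x" using der_cont[OF D] s t by auto
      fix u assume u: "s < u" "u < t"
      have "dist (d u) (d s) < - d s" using e u t s by (auto simp: dist_real_def)
      then have "d u \<le> 0" by (auto simp: dist_real_def)
      moreover have "(x has_real_derivative d u) (at u)" using der_at[OF D] u s t by auto
      ultimately show "\<exists>y. (x has_real_derivative y) (at u) \<and> y \<le> 0" by blast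
    qed
    then show "x t \<le> c" using le by auto
  qed (simp add: e(1))
qed

lemma barrier:
  fixes x d :: "real \<Rightarrow> real"
  assumes D: "\<forall>t\<in>{0..<T}. (x has_real_derivative d t) (at t within {0..<T})"
    and s: "0 \<le> s" "s \<le> t" "t < T" and x0: "x s \<ge> 0"
    and sg: "\<forall>u. s < u \<and> u < t \<and> x u < 0 \<longrightarrow> d u \<ge> 0"
  shows "x t \<ge> 0"
proof (rule ccontr)
  assume neg: "\<not> x t \<ge> 0"
  have cont: "continuous_on {s..t} x" using der_cont[OF D] s by auto
  define K where "K = {s..t} \<inter> x -` {0..}"
  have cl: "closed K" unfolding K_def by (rule continuous_closed_preimage[OF cont]) auto
  have "s \<in> K" using s x0 by (auto simp: K_def)
  then have ne: "K \<noteq> {}" by blast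
  have bdd: "bdd_above K" unfolding K_def by (rule bdd_aboveI[of _ t]) auto
  have SK: "Sup K \<in> K" by (rule closed_contains_Sup[OF ne bdd cl])
  define t0 where "t0 = Sup K"
  have t0: "s \<le> t0" "t0 \<le> t" "x t0 \<ge> 0" using SK by (auto simp: K_def t0_def)
  have after: "x u < 0" if "t0 < u" "u \<le> t" for u
  proof (rule ccontr)
    assume "\<not> x u < 0"
    then have "u \<in> K" using that t0 by (auto simp: K_def)
    then have "u \<le> t0" unfolding t0_def using bdd by (rule cSup_upper)
    then show False using that by auto
  qed
  have "x t0 \<le> x t"
  proof (rule DERIV_nonneg_imp_increasing_open[of t0 t x])
    show "t0 \<le> t" using t0 by auto
    show "continuous_on {t0..t} x" using der_cont[OF D] s t0 by auto
    fix u assume u: "t0 < u" "u < t"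
    have "d u \<ge> 0" using sg after[of u] u t0 by auto
    moreover have "(x has_real_derivative d u) (at u)" using der_at[OF D] u s t0 by auto
    ultimately show "\<exists>y. (x has_real_derivative y) (at u) \<and> y \<ge> 0" by blast
  qed
  then show False using neg t0 by auto
qed

lemma alg_a:
  fixes lambda q sigma_B eps_a mu La ba0 Ma y :: real
  assumes "lambda \<ge> 0" "q > 0" "sigma_B > 0" "eps_a > 0" "mu > 0" "mu^4 < 2"
    and "Ma \<ge> 1" "Ma \<ge> (lambda * mu + q * \<bar>La\<bar> + q * \<bar>ba0\<bar>) / (eps_a * sigma_B * (2 - mu^4)) + 1"
    and "0 \<le> y" "y \<le> mu * Ma" and bb: "b \<le> ba0 + \<bar>La\<bar> * Ma"
  shows "- lambda * (Ma - y) + eps_a * sigma_B * \<bar>y\<bar>^3 * y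
                      - 2 * eps_a * sigma_B * \<bar>Ma\<bar>^3 * Ma + q * b < 0"
proof -
  define c where "c = eps_a * sigma_B * (2 - mu^4)"
  define K where "K = lambda * mu + q * \<bar>La\<bar> + q * \<bar>ba0\<bar>"
  have c: "c > 0" using assms by (simp add: c_def)
  have K: "K \<ge> 0" using assms by (simp add: K_def)
  have y4: "\<bar>y\<bar>^3 * y = y^4" using assms by (simp add: power_def)
  have M4: "\<bar>Ma\<bar>^3 * Ma = Ma^4" using assms by (simp add: power_def)
  have "y^4 \<le> (mu * Ma)^4" using assms by (intro power_mono) auto
  then have y4b: "y^4 \<le> mu^4 * Ma^4" by (simp add: power_mult_distrib)
  have "lambda * y \<le> lambda * (mu * Ma)" using assms by (intro mult_left_mono) auto
  moreover have "lambda * Ma \<ge> 0" using assms by simp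
  ultimately have l1: "- lambda * (Ma - y) \<le> lambda * mu * Ma" by (simp add: algebra_simps)
  have l2: "q * b \<le> q * \<bar>ba0\<bar> * Ma + q * \<bar>La\<bar> * Ma"
  proof -
    have "q * b \<le> q * (ba0 + \<bar>La\<bar> * Ma)" using bb assms by (intro mult_left_mono) auto
    also have "\<dots> \<le> q * \<bar>ba0\<bar> * Ma + q * \<bar>La\<bar> * Ma"
    proof -
      have "ba0 \<le> \<bar>ba0\<bar> * Ma" using assms by (smt (verit) mult_le_cancel_left1)
      then show ?thesis using assms by (simp add: algebra_simps)
    qed
    finally show ?thesis .
  qed
  have e1: "eps_a * sigma_B * y^4 \<le> eps_a * sigma_B * (mu^4 * Ma^4)"
    using y4b assms by (intro mult_left_mono) auto
  have lhs: "- lambda * (Ma - y) + eps_a * sigma_B * \<bar>y\<bar>^3 * y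
                      - 2 * eps_a * sigma_B * \<bar>Ma\<bar>^3 * Ma + q * b \<le> K * Ma - c * Ma^4"
  proof -
    have q1: "eps_a * sigma_B * \<bar>y\<bar>^3 * y = eps_a * sigma_B * y^4" by (simp add: y4 mult.assoc)
    have q2: "2 * eps_a * sigma_B * \<bar>Ma\<bar>^3 * Ma = 2 * eps_a * sigma_B * Ma^4" by (simp add: M4 mult.assoc)
    have "- lambda * (Ma - y) + eps_a * sigma_B * \<bar>y\<bar>^3 * y
                      - 2 * eps_a * sigma_B * \<bar>Ma\<bar>^3 * Ma + q * b \<le> lambda * mu * Ma + eps_a * sigma_B * (mu^4 * Ma^4) - 2 * eps_a * sigma_B * Ma^4 + (q * \<bar>ba0\<bar> * Ma + q * \<bar>La\<bar> * Ma)"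
      using l1 l2 e1 q1 q2 by linarith
    also have "\<dots> = K * Ma - c * Ma^4" by (simp add: K_def c_def algebra_simps)
    finally show ?thesis .
  qed
  have "Ma > K / c" using assms by (simp add: K_def c_def)
  then have "c * Ma > K" using c by (simp add: field_simps)
  moreover have "Ma^3 \<ge> Ma"
  proof -
    have "1 \<le> Ma^2" using assms by (simp add: one_le_power)
    then have "Ma * 1 \<le> Ma * Ma^2" using assms by (intro mult_left_mono) auto
    then show ?thesis by (simp add: power2_eq_square power3_eq_cube)
  qed
  ultimately have "c * Ma^3 > K" using c by (smt (verit) mult_left_mono)
  then have "c * Ma^3 * Ma > K * Ma" using assms by (intro mult_strict_right_mono) auto
  then have "c * Ma^4 > K * Ma" by (simp add: power_def algebra_simps)
  then show ?thesis using lhs by linarith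
qed

lemma alg_s:
  fixes lambda q sigma_B eps_a mu Ls bs0 Ma x :: real
  assumes "lambda \<ge> 0" "q > 0" "sigma_B > 0" "eps_a > 0" "mu > 0" "eps_a < mu^4"
    and "Ma \<ge> 1" "Ma \<ge> (lambda + q * \<bar>Ls\<bar> * mu + q * \<bar>bs0\<bar>) / (sigma_B * (mu^4 - eps_a)) + 1"
    and "0 \<le> x" "x \<le> Ma" and bb: "b \<le> bs0 + \<bar>Ls\<bar> * (mu * Ma)"
  shows "- lambda * (mu * Ma - x) - sigma_B * \<bar>mu * Ma\<bar>^3 * (mu * Ma)
                      + eps_a * sigma_B * \<bar>x\<bar>^3 * x + q * b < 0"
proof -
  define c where "c = sigma_B * (mu^4 - eps_a)"
  define K where "K = lambda + q * \<bar>Ls\<bar> * mu + q * \<bar>bs0\<bar>"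
  have c: "c > 0" using assms by (simp add: c_def)
  have x4: "\<bar>x\<bar>^3 * x = x^4" using assms by (simp add: power_def)
  have M4: "\<bar>mu * Ma\<bar>^3 * (mu * Ma) = mu^4 * Ma^4" using assms by (simp add: power_def)
  have "x^4 \<le> Ma^4" using assms by (intro power_mono) auto
  have "lambda * x \<le> lambda * Ma" using assms by (intro mult_left_mono) auto
  moreover have "lambda * (mu * Ma) \<ge> 0" using assms by simp
  ultimately have l1: "- lambda * (mu * Ma - x) \<le> lambda * Ma" by (simp add: algebra_simps)
  have l2: "q * b \<le> q * \<bar>bs0\<bar> * Ma + q * \<bar>Ls\<bar> * mu * Ma"
  proof -
    have "q * b \<le> q * (bs0 + \<bar>Ls\<bar> * (mu * Ma))" using bb assms by (intro mult_left_mono) auto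
    also have "\<dots> \<le> q * \<bar>bs0\<bar> * Ma + q * \<bar>Ls\<bar> * mu * Ma"
    proof -
      have "bs0 \<le> \<bar>bs0\<bar> * Ma" using assms by (smt (verit) mult_le_cancel_left1)
      then show ?thesis using assms by (simp add: algebra_simps)
    qed
    finally show ?thesis .
  qed
  have e1: "eps_a * sigma_B * x^4 \<le> eps_a * sigma_B * Ma^4"
    using \<open>x^4 \<le> Ma^4\<close> assms by (intro mult_left_mono) auto
  have lhs: "- lambda * (mu * Ma - x) - sigma_B * \<bar>mu * Ma\<bar>^3 * (mu * Ma)
                      + eps_a * sigma_B * \<bar>x\<bar>^3 * x + q * b \<le> K * Ma - c * Ma^4"
  proof -
    have q1: "eps_a * sigma_B * \<bar>x\<bar>^3 * x = eps_a * sigma_B * x^4" by (simp add: x4 mult.assoc)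
    have q2: "sigma_B * \<bar>mu * Ma\<bar>^3 * (mu * Ma) = sigma_B * (mu^4 * Ma^4)" by (simp add: M4 mult.assoc)
    have "- lambda * (mu * Ma - x) - sigma_B * \<bar>mu * Ma\<bar>^3 * (mu * Ma)
                      + eps_a * sigma_B * \<bar>x\<bar>^3 * x + q * b \<le> lambda * Ma - sigma_B * (mu^4 * Ma^4) + eps_a * sigma_B * Ma^4 + (q * \<bar>bs0\<bar> * Ma + q * \<bar>Ls\<bar> * mu * Ma)"
      using l1 l2 e1 q1 q2 by linarith
    also have "\<dots> = K * Ma - c * Ma^4" by (simp add: K_def c_def algebra_simps)
    finally show ?thesis .
  qed
  have "Ma > K / c" using assms by (simp add: K_def c_def)
  then have "c * Ma > K" using c by (simp add: field_simps)
  moreover have "Ma^3 \<ge> Ma"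
  proof -
    have "1 \<le> Ma^2" using assms by (simp add: one_le_power)
    then have "Ma * 1 \<le> Ma * Ma^2" using assms by (intro mult_left_mono) auto
    then show ?thesis by (simp add: power2_eq_square power3_eq_cube)
  qed
  ultimately have "c * Ma^3 > K" using c by (smt (verit) mult_left_mono)
  then have "c * Ma^3 * Ma > K * Ma" using assms by (intro mult_strict_right_mono) auto
  then have "c * Ma^4 > K * Ma" by (simp add: power_def algebra_simps)
  then show ?thesis using lhs by linarith
qed


theorem lemma4p2:
  fixes gamma_a gamma_s lambda q sigma_B eps_a mu :: real
    and beta_a beta_s :: "real \<Rightarrow> real"
  assumes "gamma_a > 0" "gamma_s > 0" "lambda \<ge> 0" "q > 0" "sigma_B > 0"
    and "0 < eps_a" "eps_a < 2"
    and "\<exists>L. L-lipschitz_on UNIV beta_a" "\<exists>L. L-lipschitz_on UNIV beta_s"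
    and "\<forall>x. beta_a x \<ge> 0" "\<forall>x. beta_s x > 0"
    and "root 4 eps_a < mu" "mu < root 4 2"
  shows "\<exists>M0>0. \<forall>Ma\<ge>M0. \<forall>Ta0 Ts0.
           Ta0 \<in> {0..Ma} \<and> Ts0 \<in> {0..mu * Ma} \<longrightarrow>
           (\<forall>T>0. \<forall>Ta Ts :: real \<Rightarrow> real.
              Ta 0 = Ta0 \<and> Ts 0 = Ts0 \<and>
              (\<forall>t\<in>{0..<T}.
                 (Ta has_real_derivative
                    ((- lambda * (Ta t - Ts t) + eps_a * sigma_B * \<bar>Ts t\<bar>^3 * Ts t
                      - 2 * eps_a * sigma_B * \<bar>Ta t\<bar>^3 * Ta t + q * beta_a (Ta t)) / gamma_a))
                   (at t within {0..<T}) \<and>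
                 (Ts has_real_derivative
                    ((- lambda * (Ts t - Ta t) - sigma_B * \<bar>Ts t\<bar>^3 * Ts t
                      + eps_a * sigma_B * \<bar>Ta t\<bar>^3 * Ta t + q * beta_s (Ts t)) / gamma_s))
                   (at t within {0..<T}))
              \<longrightarrow> (\<forall>t\<in>{0..<T}. Ta t \<in> {0..Ma} \<and> Ts t \<in> {0..mu * Ma}))"
proof -
  note gA = assms(1) and gS = assms(2) and lam = assms(3) and qp = assms(4) and sig = assms(5)
    and ep = assms(6) and e2 = assms(7) and bapos = assms(10) and bspos = assms(11)
  obtain La where La: "La-lipschitz_on UNIV beta_a" using assms(8) by blast
  obtain Ls where Ls: "Ls-lipschitz_on UNIV beta_s" using assms(9) by blast
  have bA: "beta_a x \<le> beta_a 0 + \<bar>La\<bar> * \<bar>x\<bar>" for x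
  proof -
    have "dist (beta_a x) (beta_a 0) \<le> La * dist x 0" using lipschitz_onD[OF La, of x 0] by simp
    moreover have "La * \<bar>x\<bar> \<le> \<bar>La\<bar> * \<bar>x\<bar>" by (rule mult_right_mono) auto
    ultimately show ?thesis by (simp add: dist_real_def)
  qed
  have bS: "beta_s x \<le> beta_s 0 + \<bar>Ls\<bar> * \<bar>x\<bar>" for x
  proof -
    have "dist (beta_s x) (beta_s 0) \<le> Ls * dist x 0" using lipschitz_onD[OF Ls, of x 0] by simp
    moreover have "Ls * \<bar>x\<bar> \<le> \<bar>Ls\<bar> * \<bar>x\<bar>" by (rule mult_right_mono) auto
    ultimately show ?thesis by (simp add: dist_real_def)
  qed
  have icA: "isCont beta_a x" for x
    using lipschitz_on_continuous_on[OF La] continuous_on_eq_continuous_at open_UNIV by blast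
  have icS: "isCont beta_s x" for x
    using lipschitz_on_continuous_on[OF Ls] continuous_on_eq_continuous_at open_UNIV by blast
  have r0: "root 4 eps_a > 0" using ep by simp
  have mu0: "mu > 0" using r0 assms(12) by linarith
  have mu_lo: "eps_a < mu^4"
  proof -
    have "(root 4 eps_a)^4 < mu^4" using r0 assms(12) by (intro power_strict_mono) auto
    then show ?thesis using ep by simp
  qed
  have mu_hi: "mu^4 < 2"
  proof -
    have "mu^4 < (root 4 2)^4" using mu0 assms(13) by (intro power_strict_mono) auto
    then show ?thesis by simp
  qed
  define K1 where "K1 = (lambda * mu + q * \<bar>La\<bar> + q * \<bar>beta_a 0\<bar>) / (eps_a * sigma_B * (2 - mu^4))"
  define K2 where "K2 = (lambda + q * \<bar>Ls\<bar> * mu + q * \<bar>beta_s 0\<bar>) / (sigma_B * (mu^4 - eps_a))"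
  define M0 where "M0 = max 1 (max K1 K2 + 1)"
  define Fa where "Fa = (\<lambda>x y. - lambda * (x - y) + eps_a * sigma_B * \<bar>y\<bar>^3 * y
                      - 2 * eps_a * sigma_B * \<bar>x\<bar>^3 * x + q * beta_a x)"
  define Fs where "Fs = (\<lambda>x y. - lambda * (y - x) - sigma_B * \<bar>y\<bar>^3 * y
                      + eps_a * sigma_B * \<bar>x\<bar>^3 * x + q * beta_s y)"
  have FaM: "Fa Ma y < 0" if "Ma \<ge> M0" "0 \<le> y" "y \<le> mu * Ma" for Ma y
  proof -
    have "Ma \<ge> 1" using that by (simp add: M0_def)
    have "beta_a Ma \<le> beta_a 0 + \<bar>La\<bar> * Ma" using bA[of Ma] \<open>Ma \<ge> 1\<close> by simp
    moreover have "K1 + 1 \<le> Ma" using that by (simp add: M0_def) linarith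
    ultimately show ?thesis unfolding Fa_def K1_def
      using alg_a[OF lam qp sig ep mu0 mu_hi \<open>Ma \<ge> 1\<close>] that(2,3) by blast
  qed
  have FsM: "Fs x (mu * Ma) < 0" if "Ma \<ge> M0" "0 \<le> x" "x \<le> Ma" for Ma x
  proof -
    have "Ma \<ge> 1" using that by (simp add: M0_def)
    have "beta_s (mu * Ma) \<le> beta_s 0 + \<bar>Ls\<bar> * (mu * Ma)" using bS[of "mu * Ma"] \<open>Ma \<ge> 1\<close> mu0 by simp
    moreover have "K2 + 1 \<le> Ma" using that by (simp add: M0_def) linarith
    ultimately show ?thesis unfolding Fs_def K2_def
      using alg_s[OF lam qp sig ep mu0 mu_lo \<open>Ma \<ge> 1\<close>] that(2,3) by blast
  qed
  have Fa_nn: "Fa x y \<ge> 0" if "x \<le> 0" "y \<ge> 0" for x y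
  proof -
    have a1: "lambda * (x - y) \<le> 0" using lam that by (intro mult_nonneg_nonpos) auto
    have a2: "eps_a * sigma_B * \<bar>y\<bar>^3 * y \<ge> 0" using ep sig that by simp
    have "\<bar>x\<bar>^3 * x \<le> 0" using that by (intro mult_nonneg_nonpos) auto
    moreover have "2 * eps_a * sigma_B \<ge> 0" using ep sig by simp
    ultimately have a3: "2 * eps_a * sigma_B * (\<bar>x\<bar>^3 * x) \<le> 0"
      by (simp add: mult_nonneg_nonpos)
    have a4: "q * beta_a x \<ge> 0" using qp bapos by simp
    have a1': "- lambda * (x - y) \<ge> 0" using a1 by simp
    have a3': "2 * eps_a * sigma_B * \<bar>x\<bar>^3 * x \<le> 0" using a3 by (simp add: mult.assoc)
    show ?thesis using a1' a2 a3' a4 unfolding Fa_def by linarith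
  qed
  have Fs_pos: "Fs x 0 > 0" if "x \<ge> 0" for x
  proof -
    have a1: "lambda * x \<ge> 0" using lam that by simp
    have a2: "eps_a * sigma_B * \<bar>x\<bar>^3 * x \<ge> 0" using ep sig that by simp
    have a4: "q * beta_s 0 > 0" using qp bspos by simp
    show ?thesis using a1 a2 a4 unfolding Fs_def by simp
  qed
  show ?thesis
  proof (intro exI[of _ M0] conjI[of "0 < M0"] allI impI ballI)
    show "M0 > 0" by (simp add: M0_def)
    fix Ma Ta0 Ts0 T Ta Ts tt
    assume Ma: "M0 \<le> Ma" and init: "Ta0 \<in> {0..Ma} \<and> Ts0 \<in> {0..mu * Ma}" and T: "0 < T"
      and H: "Ta 0 = Ta0 \<and> Ts 0 = Ts0 \<and>
              (\<forall>t\<in>{0..<T}.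
                 (Ta has_real_derivative
                    ((- lambda * (Ta t - Ts t) + eps_a * sigma_B * \<bar>Ts t\<bar>^3 * Ts t
                      - 2 * eps_a * sigma_B * \<bar>Ta t\<bar>^3 * Ta t + q * beta_a (Ta t)) / gamma_a))
                   (at t within {0..<T}) \<and>
                 (Ts has_real_derivative
                    ((- lambda * (Ts t - Ta t) - sigma_B * \<bar>Ts t\<bar>^3 * Ts t
                      + eps_a * sigma_B * \<bar>Ta t\<bar>^3 * Ta t + q * beta_s (Ts t)) / gamma_s))
                   (at t within {0..<T}))"
      and tt: "tt \<in> {0..<T}"
    have HD: "\<forall>t\<in>{0..<T}.
                 (Ta has_real_derivative
                    ((- lambda * (Ta t - Ts t) + eps_a * sigma_B * \<bar>Ts t\<bar>^3 * Ts t
                      - 2 * eps_a * sigma_B * \<bar>Ta t\<bar>^3 * Ta t + q * beta_a (Ta t)) / gamma_a))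
                   (at t within {0..<T}) \<and>
                 (Ts has_real_derivative
                    ((- lambda * (Ts t - Ta t) - sigma_B * \<bar>Ts t\<bar>^3 * Ts t
                      + eps_a * sigma_B * \<bar>Ta t\<bar>^3 * Ta t + q * beta_s (Ts t)) / gamma_s))
                   (at t within {0..<T})"
      using H by (rule conjunct2[OF conjunct2])
    have H0: "Ta 0 = Ta0" "Ts 0 = Ts0" using H by (rule conjunct1, rule conjunct1[OF conjunct2])
    have DA: "\<forall>t\<in>{0..<T}. (Ta has_real_derivative Fa (Ta t) (Ts t) / gamma_a) (at t within {0..<T})"
      using HD unfolding Fa_def by blast
    have DS: "\<forall>t\<in>{0..<T}. (Ts has_real_derivative Fs (Ta t) (Ts t) / gamma_s) (at t within {0..<T})"
      using HD unfolding Fs_def by blast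
    have DS': "\<forall>t\<in>{0..<T}. ((\<lambda>t. - Ts t) has_real_derivative - (Fs (Ta t) (Ts t) / gamma_s)) (at t within {0..<T})"
    proof
      fix t assume "t \<in> {0..<T}"
      then show "((\<lambda>t. - Ts t) has_real_derivative - (Fs (Ta t) (Ts t) / gamma_s)) (at t within {0..<T})"
        using DS by (intro DERIV_minus) blast
    qed
    have cTa: "continuous_on {0..<T} Ta" unfolding continuous_on_eq_continuous_within
    proof
      fix t assume "t \<in> {0..<T}"
      then show "continuous (at t within {0..<T}) Ta" using DA[rule_format, of t] by (intro DERIV_continuous) 
    qed
    have cTs: "continuous_on {0..<T} Ts" unfolding continuous_on_eq_continuous_within
    proof
      fix t assume "t \<in> {0..<T}"
      then show "continuous (at t within {0..<T}) Ts" using DS[rule_format, of t] by (intro DERIV_continuous) 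
    qed
    define v where "v = (\<lambda>t. max (max (- Ta t) (Ta t - Ma)) (max (- Ts t) (Ts t - mu * Ma)))"
    have cv: "continuous_on {0..<T} v" unfolding v_def
      by (intro continuous_intros cTa cTs)
    have inR: "v t \<le> 0 \<longleftrightarrow> Ta t \<in> {0..Ma} \<and> Ts t \<in> {0..mu * Ma}" for t
      by (auto simp: v_def)
    have main: "Ta tt \<in> {0..Ma} \<and> Ts tt \<in> {0..mu * Ma}"
    proof (rule ccontr)
      assume "\<not> ?thesis"
      then have vt: "v tt > 0" using inR[of tt] by linarith
      define B where "B = {u \<in> {0..<T}. v u > 0}"
      define s where "s = Inf B"
      have ttB: "tt \<in> B" using tt vt by (simp add: B_def)
      have bdd: "bdd_below B" by (rule bdd_belowI[of _ 0]) (auto simp: B_def)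
      have s0: "0 \<le> s" unfolding s_def using ttB by (intro cInf_greatest) (auto simp: B_def)
      have sT: "s < T" using cInf_lower[OF ttB bdd] tt by (simp add: s_def)
      have before: "v u \<le> 0" if "0 \<le> u" "u < s" for u
      proof (rule ccontr)
        assume "\<not> v u \<le> 0"
        then have "u \<in> B" using that sT by (simp add: B_def)
        then have "s \<le> u" unfolding s_def using bdd by (rule cInf_lower)
        then show False using that by simp
      qed
      have vs: "v s \<le> 0"
      proof (cases "s = 0")
        case True
        then show ?thesis using H0 init inR[of 0] by simp
      next
        case False
        then have sp: "0 < s" using s0 by simp
        have "{0..s} \<subseteq> {0..<T}" using sT by auto
        then have "continuous_on {0..s} v" by (rule continuous_on_subset[OF cv])
        then show ?thesis
          using continuous_le_on_closure[of "{0..<s}" v s 0] sp before by auto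
      qed
      then have Ras: "0 \<le> Ta s" "Ta s \<le> Ma" and Rss: "0 \<le> Ts s" "Ts s \<le> mu * Ma"
        using inR[of s] by auto
      have "(Ta has_real_derivative Fa (Ta s) (Ts s) / gamma_a) (at s within {0..<T})"
        using DA s0 sT by simp
      then have cTas: "continuous (at s within {0..<T}) Ta" by (rule DERIV_continuous)
      have "(Ts has_real_derivative Fs (Ta s) (Ts s) / gamma_s) (at s within {0..<T})"
        using DS s0 sT by simp
      then have cTss: "continuous (at s within {0..<T}) Ts" by (rule DERIV_continuous)
      have cbA: "continuous (at s within {0..<T}) (\<lambda>t. beta_a (Ta t))"
        by (rule continuous_within_compose3[OF icA cTas])
      have cbS: "continuous (at s within {0..<T}) (\<lambda>t. beta_s (Ts t))"
        by (rule continuous_within_compose3[OF icS cTss])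
      have cFa: "continuous (at s within {0..<T}) (\<lambda>t. Fa (Ta t) (Ts t) / gamma_a)"
        unfolding Fa_def using gA by (intro continuous_intros cTas cTss cbA) auto
      have cFs: "continuous (at s within {0..<T}) (\<lambda>t. Fs (Ta t) (Ts t) / gamma_s)"
        unfolding Fs_def using gS by (intro continuous_intros cTas cTss cbS) auto
      have cFs': "continuous (at s within {0..<T}) (\<lambda>t. - (Fs (Ta t) (Ts t) / gamma_s))"
        using continuous_minus[OF cFs] by simp
      obtain e1 where e1: "e1 > 0" "\<forall>t. s \<le> t \<and> t < s + e1 \<and> t < T \<longrightarrow> Ta t \<le> Ma"
      proof -
        have "Ta s = Ma \<Longrightarrow> Fa (Ta s) (Ts s) / gamma_a < 0"
          using FaM[OF Ma Rss] gA by (simp add: divide_neg_pos)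
        then show ?thesis using local_upper[OF DA cFa s0 sT Ras(2)] that by blast
      qed
      obtain e2 where e2: "e2 > 0" "\<forall>t. s \<le> t \<and> t < s + e2 \<and> t < T \<longrightarrow> Ts t \<le> mu * Ma"
      proof -
        have "Ts s = mu * Ma \<Longrightarrow> Fs (Ta s) (Ts s) / gamma_s < 0"
          using FsM[OF Ma Ras] gS by (simp add: divide_neg_pos)
        then show ?thesis using local_upper[OF DS cFs s0 sT Rss(2)] that by blast
      qed
      have h1: "- Ts s \<le> 0" using Rss by simp
      have h2: "- (Fs (Ta s) (Ts s) / gamma_s) < 0" if "- Ts s = 0"
      proof -
        have "Ts s = 0" using that by simp
        then show ?thesis using Fs_pos[OF Ras(1)] gS by simp
      qed
      obtain e3 where e3: "e3 > 0" "\<forall>t. s \<le> t \<and> t < s + e3 \<and> t < T \<longrightarrow> - Ts t \<le> 0"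
        using local_upper[OF DS' cFs' s0 sT h1 h2] by blast
      define e where "e = min e1 (min e2 e3)"
      have e: "e > 0" using e1 e2 e3 by (simp add: e_def)
      have "s < s + e" using e by simp
      then obtain x where xB: "x \<in> B" and xe: "x < s + e"
        using cInf_less_iff[of B "s + e"] ttB bdd unfolding s_def by auto
      have sx: "s \<le> x" using cInf_lower[OF xB bdd] by (simp add: s_def)
      have xT: "x < T" "v x > 0" using xB by (auto simp: B_def)
      have u1: "Ta x \<le> Ma" using e1 sx xe xT by (auto simp: e_def)
      have u2: "Ts x \<le> mu * Ma" using e2 sx xe xT by (auto simp: e_def)
      have u3: "Ts x \<ge> 0" using e3 sx xe xT by (auto simp: e_def)
      have u4: "Ta x \<ge> 0"
      proof (rule barrier[OF DA s0 sx xT(1) Ras(1)], intro allI impI)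
        fix u assume u: "s < u \<and> u < x \<and> Ta u < 0"
        have "Ts u \<ge> 0" using e3 u xe xT by (auto simp: e_def)
        then have "Fa (Ta u) (Ts u) \<ge> 0" using Fa_nn u by auto
        then show "0 \<le> Fa (Ta u) (Ts u) / gamma_a" using gA by simp
      qed
      have "v x \<le> 0" using u1 u2 u3 u4 inR[of x] by auto
      then show False using xT by simp
    qed
    then show "Ta tt \<in> {0..Ma} \<and> Ts tt \<in> {0..mu * Ma}" .
  qed
qed

end
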